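(* There is an absolute constant $C$ such that for every $f:\mathcal X\times\mathcal Y\to\{0,1\}$ and every $\delta\in(0,1/8)$, $\log\mathsf{prt}_\delta(f)\le C\log(1/\delta)\cdot\log\mathsf{prt}_{1/8}(f)$.
   Context: A rectangle is $A\times B$ with $A\subseteq\mathcal X,B\subseteq\mathcal Y$. The partition bound $\mathsf{prt}_\epsilon(f)$ is the optimal value of the LP: minimize $\sum_{z}\sum_R w_{z,R}$ over rectangles $R$ and outputs $z$, subject to $\sum_{R\ni(x,y)}w_{f(x,y),R}\ge1-\epsilon$ for all $(x,y)$; $\sum_{R\ni(x,y)}\sum_z w_{z,R}=1$ for all $(x,y)$; $w_{z,R}\ge0$. Logs base 2. *)

theory Defs
  imports Complex_Main
begin

(* Rectangles A \<times> B with A \<subseteq> X, B \<subseteq> Y, represented by the pair (A, B). *)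
definition rects :: "'a set \<Rightarrow> 'b set \<Rightarrow> ('a set \<times> 'b set) set" where
  "rects X Y = Pow X \<times> Pow Y"

(* Feasible solutions of the partition-bound LP; outputs z range over bool = {0,1}. *)
definition prt_feasible ::
  "'a set \<Rightarrow> 'b set \<Rightarrow> ('a \<Rightarrow> 'b \<Rightarrow> bool) \<Rightarrow> real
     \<Rightarrow> (bool \<Rightarrow> 'a set \<times> 'b set \<Rightarrow> real) \<Rightarrow> bool" where
  "prt_feasible X Y f eps w \<longleftrightarrow>
     (\<forall>z. \<forall>R\<in>rects X Y. w z R \<ge> 0) \<and>
     (\<forall>x\<in>X. \<forall>y\<in>Y.
        (\<Sum>R\<in>{R\<in>rects X Y. (x, y) \<in> fst R \<times> snd R}. w (f x y) R) \<ge> 1 - eps) \<and>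
     (\<forall>x\<in>X. \<forall>y\<in>Y.
        (\<Sum>R\<in>{R\<in>rects X Y. (x, y) \<in> fst R \<times> snd R}. \<Sum>z\<in>UNIV. w z R) = 1)"

definition prt :: "'a set \<Rightarrow> 'b set \<Rightarrow> ('a \<Rightarrow> 'b \<Rightarrow> bool) \<Rightarrow> real \<Rightarrow> real" where
  "prt X Y f eps =
     Inf {(\<Sum>z\<in>UNIV. \<Sum>R\<in>rects X Y. w z R) | w. prt_feasible X Y f eps w}"

end

theory Submission imports Defs begin

definition meet :: "'a set \<times> 'b set \<Rightarrow> 'a set \<times> 'b set \<Rightarrow> 'a set \<times> 'b set" where
  "meet R1 R2 = (fst R1 \<inter> fst R2, snd R1 \<inter> snd R2)"

primrec Wk :: "'a set \<Rightarrow> 'b set \<Rightarrow> (bool \<Rightarrow> 'a set \<times> 'b set \<Rightarrow> real) \<Rightarrow> nat \<Rightarrow> nat \<Rightarrow> 'a set \<times> 'b set \<Rightarrow> real" where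
  "Wk X Y w 0 c R = (if c = 0 \<and> R = (X,Y) then 1 else 0)"
| "Wk X Y w (Suc k) c R = (\<Sum>P\<in>{P\<in>rects X Y \<times> rects X Y. meet (fst P) (snd P) = R}.
      Wk X Y w k c (fst P) * w False (snd P) +
      (if c > 0 then Wk X Y w k (c - 1) (fst P) * w True (snd P) else 0))"

lemma finite_rects: "finite X \<Longrightarrow> finite Y \<Longrightarrow> finite (rects X Y)"
  by (simp add: rects_def)

lemma meet_rects: "R1 \<in> rects X Y \<Longrightarrow> R2 \<in> rects X Y \<Longrightarrow> meet R1 R2 \<in> rects X Y"
  by (auto simp: rects_def meet_def)

lemma fiber_sum:
  assumes fin: "finite X" "finite Y"
    and Qm: "\<And>R1 R2. R1 \<in> rects X Y \<Longrightarrow> R2 \<in> rects X Y \<Longrightarrow> Q (meet R1 R2) = (Q R1 \<and> Q R2)"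
  shows "(\<Sum>R\<in>{R\<in>rects X Y. Q R}. \<Sum>P\<in>{P\<in>rects X Y \<times> rects X Y. meet (fst P) (snd P) = R}. g P)
       = (\<Sum>R1\<in>{R\<in>rects X Y. Q R}. \<Sum>R2\<in>{R\<in>rects X Y. Q R}. g (R1, R2))"
proof -
  let ?T = "{R\<in>rects X Y. Q R}"
  let ?S = "?T \<times> ?T"
  have fT: "finite ?T" using finite_rects[OF fin] by auto
  have fS: "finite ?S" using fT by auto
  have img: "(\<lambda>P. meet (fst P) (snd P)) ` ?S \<subseteq> ?T"
    using Qm meet_rects by fastforce
  have "(\<Sum>R\<in>?T. \<Sum>P\<in>{P\<in>rects X Y \<times> rects X Y. meet (fst P) (snd P) = R}. g P)
      = (\<Sum>R\<in>?T. \<Sum>P\<in>{P. P \<in> ?S \<and> meet (fst P) (snd P) = R}. g P)"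
  proof (rule sum.cong[OF refl])
    fix R assume R: "R \<in> ?T"
    have "{P\<in>rects X Y \<times> rects X Y. meet (fst P) (snd P) = R} = {P. P \<in> ?S \<and> meet (fst P) (snd P) = R}"
      using R Qm by auto
    then show "(\<Sum>P\<in>{P\<in>rects X Y \<times> rects X Y. meet (fst P) (snd P) = R}. g P) = (\<Sum>P\<in>{P. P \<in> ?S \<and> meet (fst P) (snd P) = R}. g P)"
      by simp
  qed
  also have "\<dots> = (\<Sum>P\<in>?S. g P)"
    by (rule sum.group[OF fS fT img])
  also have "\<dots> = (\<Sum>(R1,R2)\<in>?S. g (R1, R2))" by simp
  also have "\<dots> = (\<Sum>R1\<in>?T. \<Sum>R2\<in>?T. g (R1, R2))"
    by (rule sum.cartesian_product[symmetric])
  finally show ?thesis .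
qed

definition Gs where
  "Gs X Y w Q k c = (\<Sum>R\<in>{R\<in>rects X Y. Q R}. Wk X Y w k c R)"

lemma Gs_Suc:
  assumes fin: "finite X" "finite Y"
    and Qm: "\<And>R1 R2. R1 \<in> rects X Y \<Longrightarrow> R2 \<in> rects X Y \<Longrightarrow> Q (meet R1 R2) = (Q R1 \<and> Q R2)"
  shows "Gs X Y w Q (Suc k) c = Gs X Y w Q k c * (\<Sum>R\<in>{R\<in>rects X Y. Q R}. w False R)
     + (if c > 0 then Gs X Y w Q k (c - 1) * (\<Sum>R\<in>{R\<in>rects X Y. Q R}. w True R) else 0)"
proof -
  let ?T = "{R\<in>rects X Y. Q R}"
  have "Gs X Y w Q (Suc k) c = (\<Sum>R1\<in>?T. \<Sum>R2\<in>?T. Wk X Y w k c R1 * w False R2 +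
      (if c > 0 then Wk X Y w k (c - 1) R1 * w True R2 else 0))"
    unfolding Gs_def Wk.simps
    using fiber_sum[OF fin Qm, where g = "\<lambda>P. Wk X Y w k c (fst P) * w False (snd P) +
      (if c > 0 then Wk X Y w k (c - 1) (fst P) * w True (snd P) else 0)"] by (simp cong: if_cong)
  also have "\<dots> = (\<Sum>R1\<in>?T. \<Sum>R2\<in>?T. Wk X Y w k c R1 * w False R2) +
      (if c > 0 then (\<Sum>R1\<in>?T. \<Sum>R2\<in>?T. Wk X Y w k (c - 1) R1 * w True R2) else 0)"
    by (cases "c > 0") (simp_all only: sum.distrib if_True if_False add_0_right sum.neutral_const)
  also have "\<dots> = Gs X Y w Q k c * (\<Sum>R\<in>?T. w False R)
     + (if c > 0 then Gs X Y w Q k (c - 1) * (\<Sum>R\<in>?T. w True R) else 0)"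
    unfolding Gs_def by (simp only: sum_product)
  finally show ?thesis .
qed

lemma Gs_closed:
  assumes fin: "finite X" "finite Y"
    and Qm: "\<And>R1 R2. R1 \<in> rects X Y \<Longrightarrow> R2 \<in> rects X Y \<Longrightarrow> Q (meet R1 R2) = (Q R1 \<and> Q R2)"
    and QXY: "Q (X, Y)"
  shows "Gs X Y w Q k c = real (k choose c) * (\<Sum>R\<in>{R\<in>rects X Y. Q R}. w True R) ^ c
                          * (\<Sum>R\<in>{R\<in>rects X Y. Q R}. w False R) ^ (k - c)"
proof (induction k arbitrary: c)
  case 0
  have XY: "(X, Y) \<in> {R\<in>rects X Y. Q R}" using QXY by (simp add: rects_def)
  have f: "finite {R\<in>rects X Y. Q R}" using finite_rects[OF fin] by auto
  show ?case
  proof (cases "c = 0")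
    case True
    have "(\<Sum>R\<in>{R\<in>rects X Y. Q R}. if c = 0 \<and> R = (X,Y) then 1 else (0::real))
        = (\<Sum>R\<in>{R\<in>rects X Y. Q R}. if R = (X,Y) then 1 else 0)"
      using True by (intro sum.cong) auto
    also have "\<dots> = 1" by (rule trans[OF sum.delta[OF f, of "(X,Y)" "\<lambda>_. 1::real"]]) (use XY in simp)
    finally show ?thesis using True unfolding Gs_def by simp
  qed (simp add: Gs_def)
next
  case (Suc k)
  define a where "a = (\<Sum>R\<in>{R\<in>rects X Y. Q R}. w False R)"
  define b where "b = (\<Sum>R\<in>{R\<in>rects X Y. Q R}. w True R)"
  have rec: "Gs X Y w Q (Suc k) c = Gs X Y w Q k c * a + (if c > 0 then Gs X Y w Q k (c - 1) * b else 0)"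
    unfolding a_def b_def by (rule Gs_Suc[OF fin Qm])
  show ?case
  proof (cases c)
    case 0
    then show ?thesis using rec Suc.IH[of 0] by (simp add: a_def b_def)
  next
    case (Suc d)
    have "Gs X Y w Q (Suc k) c = real (k choose Suc d) * b ^ Suc d * a ^ (k - Suc d) * a
        + real (k choose d) * b ^ d * a ^ (k - d) * b"
      using rec Suc.IH[of c] Suc.IH[of d] Suc by (simp add: a_def b_def)
    also have "\<dots> = real (Suc k choose Suc d) * b ^ Suc d * a ^ (Suc k - Suc d)"
    proof (cases "d < k")
      case True
      then obtain e where e: "k - d = Suc e" "k - Suc d = e" by (metis Suc_diff_Suc)
      show ?thesis using e by (simp add: algebra_simps)
    next
      case False
      then show ?thesis
        by (cases "d = k") (auto simp: algebra_simps)
    qed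
    finally show ?thesis using Suc by (simp add: a_def b_def)
  qed
qed


lemma Wk_nonneg:
  assumes "\<forall>z. \<forall>R\<in>rects X Y. w z R \<ge> 0"
  shows "Wk X Y w k c R \<ge> 0"
proof (induction k arbitrary: c R)
  case 0 then show ?case by simp
next
  case (Suc k)
  show ?case unfolding Wk.simps
    using assms Suc.IH by (intro sum_nonneg) (auto intro!: add_nonneg_nonneg mult_nonneg_nonneg)
qed

lemma Gs_sum:
  assumes fin: "finite X" "finite Y"
    and Qm: "\<And>R1 R2. R1 \<in> rects X Y \<Longrightarrow> R2 \<in> rects X Y \<Longrightarrow> Q (meet R1 R2) = (Q R1 \<and> Q R2)"
    and QXY: "Q (X, Y)"
  shows "(\<Sum>c\<le>k. Gs X Y w Q k c) = ((\<Sum>R\<in>{R\<in>rects X Y. Q R}. w True R) + (\<Sum>R\<in>{R\<in>rects X Y. Q R}. w False R)) ^ k"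
  unfolding binomial_ring using Gs_closed[OF fin Qm QXY] by simp

lemma bad_bound:
  fixes a b :: real
  assumes "a \<ge> 0" "b \<ge> 0" "a + b = 1" "(if t then a else b) \<le> 1/8"
  shows "(\<Sum>c\<le>2*m. if (2*c > 2*m) = (\<not> t) then real (2*m choose c) * b^c * a^(2*m-c) else 0) \<le> (1/2)^m"
proof -
  have trm: "(if (2*c > 2*m) = (\<not> t) then real (2*m choose c) * b^c * a^(2*m-c) else 0)
      \<le> real (2*m choose c) * (1/8)^m" for c
  proof (cases "(2*c > 2*m) = (\<not> t)")
    case True
    have a1: "a \<le> 1" "b \<le> 1" using assms by auto
    have "b^c * a^(2*m-c) \<le> (1/8)^m"
    proof (cases t)
      case True
      with \<open>(2*c > 2*m) = (\<not> t)\<close> have "2*m - c \<ge> m" by auto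
      have "a \<le> 1/8" using assms True by simp
      have "b^c \<le> 1" using a1 assms by (simp add: power_le_one)
      moreover have "a^(2*m-c) \<le> a^m" using power_decreasing[OF \<open>2*m - c \<ge> m\<close> assms(1) a1(1)] .
      moreover have "a^m \<le> (1/8)^m" using power_mono[OF \<open>a \<le> 1/8\<close>] assms by simp
      ultimately have "b^c * a^(2*m-c) \<le> 1 * (1/8)^m"
        using assms by (intro mult_mono) auto
      then show ?thesis by simp
    next
      case False
      with \<open>(2*c > 2*m) = (\<not> t)\<close> have "c \<ge> m" by auto
      have "b \<le> 1/8" using assms False by simp
      have "a^(2*m-c) \<le> 1" using a1 assms by (simp add: power_le_one)
      moreover have "b^c \<le> b^m" using power_decreasing[OF \<open>c \<ge> m\<close> assms(2) a1(2)] .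
      moreover have "b^m \<le> (1/8)^m" using power_mono[OF \<open>b \<le> 1/8\<close>] assms by simp
      ultimately have "b^c * a^(2*m-c) \<le> (1/8)^m * 1"
        using assms by (intro mult_mono) auto
      then show ?thesis by simp
    qed
    then have "real (2*m choose c) * (b^c * a^(2*m-c)) \<le> real (2*m choose c) * (1/8)^m"
      by (intro mult_left_mono) auto
    then show ?thesis using True by (simp add: mult.assoc)
  next
    case False then show ?thesis by simp
  qed
  have "(\<Sum>c\<le>2*m. if (2*c > 2*m) = (\<not> t) then real (2*m choose c) * b^c * a^(2*m-c) else 0)
     \<le> (\<Sum>c\<le>2*m. real (2*m choose c) * (1/8)^m)"
    by (intro sum_mono trm)
  also have "\<dots> = real (\<Sum>c\<le>2*m. 2*m choose c) * (1/8)^m"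
    by (simp add: sum_distrib_right)
  also have "\<dots> = 4^m * (1/8)^m" unfolding choose_row_sum by (simp add: power_mult)
  also have "\<dots> = (1/2)^m" by (simp add: power_mult_distrib[symmetric])
  finally show ?thesis .
qed


lemma meet_pt: "(p \<in> fst (meet R1 R2) \<times> snd (meet R1 R2)) = (p \<in> fst R1 \<times> snd R1 \<and> p \<in> fst R2 \<times> snd R2)"
  by (cases p) (auto simp: meet_def)

lemma XY_rect: "(X, Y) \<in> rects X Y" by (simp add: rects_def)

lemma amplify:
  fixes m :: nat
  assumes fin: "finite X" "finite Y" and feas: "prt_feasible X Y f (1/8) w"
  defines "w' \<equiv> \<lambda>z R. \<Sum>c\<le>2*m. if (2*c > 2*m) = z then Wk X Y w (2*m) c R else 0"
  shows "prt_feasible X Y f ((1/2)^m) w' \<and>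
         (\<Sum>z\<in>UNIV. \<Sum>R\<in>rects X Y. w' z R) = (\<Sum>z\<in>UNIV. \<Sum>R\<in>rects X Y. w z R)^(2*m)"
proof -
  have nn: "\<forall>z. \<forall>R\<in>rects X Y. w z R \<ge> 0" using feas by (simp add: prt_feasible_def)
  have sumz: "(\<Sum>z\<in>UNIV. w' z R) = (\<Sum>c\<le>(2*m). Wk X Y w (2*m) c R)" for R
    unfolding w'_def  UNIV_bool
    by (simp add: sum.distrib[symmetric] cong: if_cong) (intro sum.cong; auto)
  have fR: "finite (rects X Y)" using finite_rects[OF fin] .
  have swap: "(\<Sum>R\<in>{R\<in>rects X Y. Q R}. \<Sum>c\<le>(2*m). if P c then Wk X Y w (2*m) c R else 0)
      = (\<Sum>c\<le>(2*m). if P c then Gs X Y w Q (2*m) c else 0)" for Q P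
    unfolding Gs_def by (subst sum.swap) (intro sum.cong; simp)
  have nn': "\<forall>z. \<forall>R\<in>rects X Y. w' z R \<ge> 0"
    unfolding w'_def using Wk_nonneg[OF nn] by (auto intro!: sum_nonneg)
  have pt: "(\<Sum>R\<in>{R\<in>rects X Y. (x, y) \<in> fst R \<times> snd R}. w' (f x y) R) \<ge> 1 - (1/2)^m
        \<and> (\<Sum>R\<in>{R\<in>rects X Y. (x, y) \<in> fst R \<times> snd R}. \<Sum>z\<in>UNIV. w' z R) = 1"
    if xy: "x \<in> X" "y \<in> Y" for x y
  proof -
    let ?Q = "\<lambda>R. (x, y) \<in> fst R \<times> snd R"
    let ?T = "{R\<in>rects X Y. ?Q R}"
    define a where "a = (\<Sum>R\<in>?T. w False R)"
    define b where "b = (\<Sum>R\<in>?T. w True R)"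
    have Qm: "?Q (meet R1 R2) = (?Q R1 \<and> ?Q R2)" for R1 R2 by (rule meet_pt)
    have QXY: "?Q (X, Y)" using xy by simp
    have Tsub: "?T \<subseteq> rects X Y" by auto
    have a0: "a \<ge> 0" unfolding a_def using nn by (intro sum_nonneg) auto
    have b0: "b \<ge> 0" unfolding b_def using nn by (intro sum_nonneg) auto
    have ab1: "b + a = 1"
    proof -
      have "(\<Sum>R\<in>?T. \<Sum>z\<in>UNIV. w z R) = 1" using feas xy by (simp add: prt_feasible_def)
      then show ?thesis unfolding a_def b_def UNIV_bool by (simp add: sum.distrib add.commute)
    qed
    have corr: "(\<Sum>R\<in>?T. w (f x y) R) \<ge> 1 - 1/8" using feas xy by (simp add: prt_feasible_def)
    have G: "Gs X Y w ?Q (2*m) c = real ((2*m) choose c) * b ^ c * a ^ ((2*m) - c)" for c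
      unfolding a_def b_def by (rule Gs_closed[OF fin Qm QXY])
    have tot: "(\<Sum>c\<le>(2*m). Gs X Y w ?Q (2*m) c) = 1"
      using Gs_sum[OF fin Qm QXY, where k="2*m" and w=w] ab1 unfolding a_def b_def by simp
    have good: "(\<Sum>R\<in>?T. w' (f x y) R) = (\<Sum>c\<le>(2*m). if (2*c > (2*m)) = f x y then Gs X Y w ?Q (2*m) c else 0)"
      unfolding w'_def by (rule swap)
    have split: "(\<Sum>c\<le>(2*m). Gs X Y w ?Q (2*m) c) = (\<Sum>c\<le>(2*m). if (2*c > (2*m)) = f x y then Gs X Y w ?Q (2*m) c else 0)
        + (\<Sum>c\<le>(2*m). if (2*c > (2*m)) = (\<not> f x y) then Gs X Y w ?Q (2*m) c else 0)"
      by (subst sum.distrib[symmetric]) (intro sum.cong; auto)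
    have "(if f x y then a else b) \<le> 1/8" using corr ab1 by (cases "f x y") (auto simp: a_def b_def)
    from bad_bound[OF a0 b0 _ this, of m] ab1
    have bad: "(\<Sum>c\<le>(2*m). if (2*c > (2*m)) = (\<not> f x y) then Gs X Y w ?Q (2*m) c else 0) \<le> (1/2)^m"
      by (simp only: G; simp add: add.commute)
    have s1: "(\<Sum>R\<in>?T. \<Sum>z\<in>UNIV. w' z R) = 1"
      unfolding sumz using swap[where Q="?Q" and P="\<lambda>_. True"] tot by simp
    show ?thesis using good split tot bad s1 by linarith
  qed
  have feas': "prt_feasible X Y f ((1/2)^m) w'"
    unfolding prt_feasible_def using nn' pt by auto
  have "(\<Sum>z\<in>UNIV. \<Sum>R\<in>rects X Y. w' z R) = (\<Sum>R\<in>rects X Y. \<Sum>z\<in>UNIV. w' z R)"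
    by (rule sum.swap)
  also have "\<dots> = (\<Sum>R\<in>{R\<in>rects X Y. True}. \<Sum>c\<le>(2*m). if True then Wk X Y w (2*m) c R else 0)"
    unfolding sumz by simp
  also have "\<dots> = (\<Sum>c\<le>(2*m). Gs X Y w (\<lambda>_. True) (2*m) c)"
    unfolding swap by simp
  also have "\<dots> = ((\<Sum>R\<in>{R\<in>rects X Y. True}. w True R) + (\<Sum>R\<in>{R\<in>rects X Y. True}. w False R)) ^ (2*m)"
    by (rule Gs_sum[OF fin]) auto
  also have "\<dots> = (\<Sum>z\<in>UNIV. \<Sum>R\<in>rects X Y. w z R)^(2*m)"
    unfolding  UNIV_bool by (simp add: add.commute)
  finally show ?thesis using feas' by simp
qed


lemma obj_ge1:
  assumes fin: "finite X" "finite Y" and feas: "prt_feasible X Y f e w" and xy: "x \<in> X" "y \<in> Y"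
  shows "(\<Sum>z\<in>UNIV. \<Sum>R\<in>rects X Y. w z R) \<ge> 1"
proof -
  have nn: "\<forall>z. \<forall>R\<in>rects X Y. w z R \<ge> 0" using feas by (simp add: prt_feasible_def)
  have "1 = (\<Sum>R\<in>{R\<in>rects X Y. (x, y) \<in> fst R \<times> snd R}. \<Sum>z\<in>UNIV. w z R)"
    using feas xy by (simp add: prt_feasible_def)
  also have "\<dots> \<le> (\<Sum>R\<in>rects X Y. \<Sum>z\<in>UNIV. w z R)"
    using nn finite_rects[OF fin] by (intro sum_mono2) (auto intro!: sum_nonneg)
  also have "\<dots> = (\<Sum>z\<in>UNIV. \<Sum>R\<in>rects X Y. w z R)" by (rule sum.swap)
  finally show ?thesis .
qed

lemma feas_mono: "prt_feasible X Y f e w \<Longrightarrow> e \<le> e' \<Longrightarrow> prt_feasible X Y f e' w"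
  unfolding prt_feasible_def by force

lemma singleton_feas:
  assumes fin: "finite X" "finite Y" and e: "e \<ge> 0"
  shows "\<exists>w. prt_feasible X Y f e w"
proof -
  define w0 where "w0 = (\<lambda>z R. if (\<exists>x\<in>X. \<exists>y\<in>Y. R = ({x},{y}) \<and> z = f x y) then 1 else (0::real))"
  have pt: "(\<Sum>R\<in>{R\<in>rects X Y. (x, y) \<in> fst R \<times> snd R}. w0 z R) = (if z = f x y then 1 else 0)"
    if xy: "x \<in> X" "y \<in> Y" for x y z
  proof -
    let ?T = "{R\<in>rects X Y. (x, y) \<in> fst R \<times> snd R}"
    have fT: "finite ?T" using finite_rects[OF fin] by auto
    have inT: "({x},{y}) \<in> ?T" using xy by (auto simp: rects_def)
    have "(\<Sum>R\<in>?T. w0 z R) = (\<Sum>R\<in>?T. if R = ({x},{y}) then (if z = f x y then 1 else 0) else 0)"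
      using xy by (intro sum.cong) (auto simp: w0_def)
    also have "\<dots> = (if z = f x y then 1 else 0)"
      by (rule trans[OF sum.delta[OF fT]]) (use inT in simp)
    finally show ?thesis .
  qed
  have "prt_feasible X Y f e w0"
    unfolding prt_feasible_def
  proof (intro conjI ballI allI)
    fix z R show "w0 z R \<ge> 0" by (simp add: w0_def)
  next
    fix x y assume "x \<in> X" "y \<in> Y"
    then show "(\<Sum>R\<in>{R\<in>rects X Y. (x, y) \<in> fst R \<times> snd R}. w0 (f x y) R) \<ge> 1 - e"
      using pt e by simp
  next
    fix x y assume xy: "x \<in> X" "y \<in> Y"
    have "(\<Sum>R\<in>{R\<in>rects X Y. (x, y) \<in> fst R \<times> snd R}. \<Sum>z\<in>UNIV. w0 z R)
        = (\<Sum>z\<in>UNIV. \<Sum>R\<in>{R\<in>rects X Y. (x, y) \<in> fst R \<times> snd R}. w0 z R)" by (rule sum.swap)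
    also have "\<dots> = 1" using pt[OF xy] by (simp add: UNIV_bool)
    finally show "(\<Sum>R\<in>{R\<in>rects X Y. (x, y) \<in> fst R \<times> snd R}. \<Sum>z\<in>UNIV. w0 z R) = 1" .
  qed
  then show ?thesis by blast
qed

theorem mainTheorem9:
  "\<exists>C::real. \<forall>(X::nat set) (Y::nat set) (f::nat \<Rightarrow> nat \<Rightarrow> bool) (\<delta>::real).
     finite X \<longrightarrow> finite Y \<longrightarrow> X \<noteq> {} \<longrightarrow> Y \<noteq> {} \<longrightarrow>
     0 < \<delta> \<longrightarrow> \<delta> < 1/8 \<longrightarrow>
     log 2 (prt X Y f \<delta>) \<le> C * log 2 (1/\<delta>) * log 2 (prt X Y f (1/8))"
proof (intro exI[of _ 3] allI impI)
  fix X Y :: "nat set" and f :: "nat \<Rightarrow> nat \<Rightarrow> bool" and \<delta> :: real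
  assume fin: "finite X" "finite Y" and ne: "X \<noteq> {}" "Y \<noteq> {}" and d: "0 < \<delta>" "\<delta> < 1/8"
  obtain x y where xy: "x \<in> X" "y \<in> Y" using ne by blast
  define S where "S e = {(\<Sum>z\<in>UNIV. \<Sum>R\<in>rects X Y. w z R) | w. prt_feasible X Y f e w}" for e
  have prtS: "prt X Y f e = Inf (S e)" for e unfolding prt_def S_def ..
  have Sne: "S e \<noteq> {}" if "e \<ge> 0" for e using singleton_feas[OF fin that, of f] unfolding S_def by blast
  have Sge: "t \<ge> 1" if "t \<in> S e" for t e using that obj_ge1[OF fin _ xy] unfolding S_def by blast
  have bdd: "bdd_below (S e)" for e using Sge by (meson bdd_belowI)
  define P where "P = prt X Y f (1/8)"
  have P1: "P \<ge> 1" unfolding P_def prtS by (rule cInf_greatest[OF Sne]) (auto intro: Sge)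
  have D1: "prt X Y f \<delta> \<ge> 1" unfolding prtS by (rule cInf_greatest[OF Sne]) (use d Sge in auto)
  define L where "L = log 2 (1/\<delta>)"
  have L3: "L > 3"
  proof -
    have "1/\<delta> > 8" using d by (simp add: field_simps)
    then have "log 2 (1/\<delta>) > log 2 8" using d by (subst log_less_cancel_iff) auto
    moreover have "log 2 (8::real) = 3"
      using log_powr_cancel[of "2::real" 3] by (simp add: powr_numeral)
    ultimately show ?thesis unfolding L_def by simp
  qed
  define m where "m = nat \<lceil>L\<rceil>"
  have mL: "real m \<ge> L" "real m < L + 1" "m > 0" using L3 unfolding m_def by linarith+
  have half: "(1/2::real)^m \<le> \<delta>"
  proof -
    have e1: "(2::real) powr L = 1/\<delta>" unfolding L_def using d by simp
    have e2: "(2::real) powr L \<le> 2 powr (real m)" using mL by (intro powr_mono) auto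
    have e3: "(2::real) powr (real m) = 2^m" by (simp add: powr_realpow)
    have "1/\<delta> \<le> 2^m" using e1 e2 e3 by linarith
    then show ?thesis using d by (simp add: field_simps power_one_over)
  qed
  have bound: "prt X Y f \<delta> \<le> t^(2*m)" if tS: "t \<in> S (1/8)" for t
  proof -
    obtain w where w: "prt_feasible X Y f (1/8) w" "t = (\<Sum>z\<in>UNIV. \<Sum>R\<in>rects X Y. w z R)"
      using tS unfolding S_def by blast
    from amplify[OF fin w(1), of m] obtain w' where
      w': "prt_feasible X Y f ((1/2)^m) w'" "(\<Sum>z\<in>UNIV. \<Sum>R\<in>rects X Y. w' z R) = t^(2*m)"
      using w(2) by blast
    have "t^(2*m) \<in> S \<delta>" using feas_mono[OF w'(1) half] w'(2) unfolding S_def by force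
    then show ?thesis unfolding prtS by (rule cInf_lower[OF _ bdd])
  qed
  define r where "r = log 2 (prt X Y f \<delta>) / (2 * real m)"
  have "2 powr r \<le> P" unfolding P_def prtS
  proof (rule cInf_greatest[OF Sne])
    show "0 \<le> (1/8::real)" by simp
  next
    fix t assume t: "t \<in> S (1/8)"
    have t1: "t \<ge> 1" using Sge[OF t] .
    have "log 2 (prt X Y f \<delta>) \<le> log 2 (t^(2*m))"
      using bound[OF t] D1 by (subst log_le_cancel_iff) auto
    also have "\<dots> = real (2*m) * log 2 t" using t1 by (simp add: log_nat_power)
    finally have "r \<le> log 2 t" unfolding r_def using mL by (simp add: field_simps)
    then have "2 powr r \<le> 2 powr (log 2 t)" by (intro powr_mono) auto
    then show "2 powr r \<le> t" using t1 by simp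
  qed
  then have "r \<le> log 2 P"
    using P1 by (metis le_log_iff less_le_trans zero_less_one one_less_numeral_iff semiring_norm(76) powr_gt_zero log_powr_cancel log_le_cancel_iff zero_less_numeral)
  then have "log 2 (prt X Y f \<delta>) \<le> 2 * real m * log 2 P" unfolding r_def using mL by (simp add: field_simps)
  also have "\<dots> \<le> 3 * L * log 2 P"
  proof (rule mult_right_mono)
    show "2 * real m \<le> 3 * L" using mL L3 by linarith
    show "0 \<le> log 2 P" using P1 by simp
  qed
  finally show "log 2 (prt X Y f \<delta>) \<le> 3 * log 2 (1/\<delta>) * log 2 (prt X Y f (1/8))"
    unfolding L_def P_def .
qed

end
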